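(* Let $(f_n)\subset L^1(\mathbb{R})$ be tight and approximately Hölder continuous. Then for every $\varepsilon>0$ there exist $n_0\in\mathbb{N}$ and $\delta>0$ such that for every $n\ge n_0$ there exists $\chi\in\mathcal{T}_\delta(\mathbb{R})$ with $\|f_n-\chi\|_{L^1(\mathbb{R})}\le\varepsilon$.
   Context: Tight: for every $\varepsilon>0$ there is $R>0$ with $\int_{|x|\ge R}|f_n(x)|\,dx\le\varepsilon$ for all $n$. Approximately Hölder continuous with exponent $\alpha\in(0,1]$: there is a constant $C>0$ such that for every $\varepsilon>0$ there is $n(\varepsilon)$ with $|f_n(x)-f_n(y)|\le C|x-y|^\alpha$ whenever $|x-y|\ge\varepsilon$ and $n\ge n(\varepsilon)$. $\mathcal{T}_\delta(\mathbb{R})$ is the set of step functions $\sum_ka_k\chi_{I_k}$ with disjoint intervals $I_k$ of length (step-width) at least $\delta$. *)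

theory Defs
  imports "HOL-Analysis.Analysis"
begin

definition tight_seq :: "(nat \<Rightarrow> real \<Rightarrow> real) \<Rightarrow> bool" where
  "tight_seq f \<longleftrightarrow>
     (\<forall>\<epsilon>>0. \<exists>R>0. \<forall>n. (LINT x:{x. \<bar>x\<bar> \<ge> R}|lborel. \<bar>f n x\<bar>) \<le> \<epsilon>)"

definition approx_holder :: "real \<Rightarrow> (nat \<Rightarrow> real \<Rightarrow> real) \<Rightarrow> bool" where
  "approx_holder \<alpha> f \<longleftrightarrow>
     (\<exists>C>0. \<forall>\<epsilon>>0. \<exists>N. \<forall>n\<ge>N. \<forall>x y. \<bar>x - y\<bar> \<ge> \<epsilon> \<longrightarrow>
        \<bar>f n x - f n y\<bar> \<le> C * \<bar>x - y\<bar> powr \<alpha>)"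

definition step_fun_delta :: "real \<Rightarrow> (real \<Rightarrow> real) \<Rightarrow> bool" where
  "step_fun_delta \<delta> g \<longleftrightarrow>
     (\<exists>(m::nat) (a::nat \<Rightarrow> real) (I::nat \<Rightarrow> real set).
        (\<forall>k<m. is_interval (I k) \<and> bounded (I k) \<and> I k \<noteq> {} \<and> Sup (I k) - Inf (I k) \<ge> \<delta>) \<and>
        (\<forall>j<m. \<forall>k<m. j \<noteq> k \<longrightarrow> I j \<inter> I k = {}) \<and>
        g = (\<lambda>x. \<Sum>k<m. a k * indicator (I k) x))"

end

theory Submission
  imports Defs
begin

lemma step_approx:
  fixes h :: "real \<Rightarrow> real" and R \<omega> :: real and M :: nat
  assumes int: "integrable lborel h" and R: "R > 0" and M: "M > 0"
    and osc: "\<And>x y. \<bar>x - y\<bar> \<le> 2*R/M \<Longrightarrow> \<bar>h x - h y\<bar> \<le> \<omega>"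
    and om: "\<omega> \<ge> 0"
  shows "\<exists>g. step_fun_delta (2*R/M) g \<and>
     (LINT x|lborel. \<bar>h x - g x\<bar>) \<le> \<omega>*(2*R) + (LINT x:{x. R \<le> \<bar>x\<bar>}|lborel. \<bar>h x\<bar>)"
proof -
  define \<delta> where "\<delta> = 2*R/M"
  have dpos: "\<delta> > 0" using R M by (simp add: \<delta>_def)
  have Md: "real M * \<delta> = 2*R" using M by (simp add: \<delta>_def)
  define I where "I = (\<lambda>k::nat. {-R + k*\<delta> ..< -R + (Suc k)*\<delta>})"
  define a where "a = (\<lambda>k::nat. h (-R + k*\<delta>))"
  define g where "g = (\<lambda>x. \<Sum>k<M. a k * indicator (I k) x)"
  have ltI: "-R + k*\<delta> < -R + (Suc k)*\<delta>" for k using dpos by (simp add: algebra_simps)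
  have disj1: "I j \<inter> I k = {}" if "j < k" for j k
  proof -
    have "real (Suc j) \<le> real k" using that by simp
    hence "(Suc j)*\<delta> \<le> k*\<delta>" using dpos by (intro mult_right_mono) auto
    thus ?thesis unfolding I_def by auto
  qed
  have disj: "I j \<inter> I k = {}" if "j \<noteq> k" for j k
    using that disj1[of j k] disj1[of k j] by (cases "j < k") auto
  have sf: "step_fun_delta \<delta> g"
    unfolding step_fun_delta_def
  proof (intro exI conjI allI impI)
    fix k assume "k < M"
    show "is_interval (I k)" unfolding I_def by (rule is_interval_co)
    show "bounded (I k)" unfolding I_def by simp
    show "I k \<noteq> {}" unfolding I_def using ltI[of k] by simp
    show "\<delta> \<le> Sup (I k) - Inf (I k)" unfolding I_def using ltI[of k]
      by (simp add: cSup_atLeastLessThan cInf_atLeastLessThan algebra_simps)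
  next
    fix j k assume "j < M" "k < M" "j \<noteq> k"
    thus "I j \<inter> I k = {}" using disj by blast
  qed (simp add: g_def)
  have meas: "{x::real. R \<le> \<bar>x\<bar>} \<in> sets lborel" by measurable
  have intI: "integrable lborel (indicat_real (I k))" for k
  proof (rule integrable_real_indicator)
    show "I k \<in> sets lborel" unfolding I_def by simp
    have "bounded (I k)" unfolding I_def by simp
    thus "emeasure lborel (I k) < \<infinity>" by (rule emeasure_bounded_finite)
  qed
  have intg: "integrable lborel g" unfolding g_def
    by (intro Bochner_Integration.integrable_sum integrable_mult_right intI)
  have intL: "integrable lborel (\<lambda>x. \<bar>h x - g x\<bar>)"
    by (intro integrable_abs Bochner_Integration.integrable_diff int intg)
  have intB: "integrable lborel (indicat_real {-R..R})"
    by (intro integrable_real_indicator emeasure_bounded_finite) auto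
  have intT: "integrable lborel (\<lambda>x. indicat_real {x. R \<le> \<bar>x\<bar>} x * \<bar>h x\<bar>)"
    using integrable_mult_indicator[OF meas integrable_abs[OF int]] by simp
  have pw: "\<bar>h x - g x\<bar> \<le> \<omega> * indicat_real {-R..R} x + indicat_real {x. R \<le> \<bar>x\<bar>} x * \<bar>h x\<bar>" for x
  proof (cases "-R \<le> x \<and> x < R")
    case True
    define k where "k = nat \<lfloor>(x+R)/\<delta>\<rfloor>"
    have q0: "0 \<le> (x+R)/\<delta>" using True dpos by simp
    have fl: "real k = of_int \<lfloor>(x+R)/\<delta>\<rfloor>" using q0 by (simp add: k_def)
    have k1: "real k \<le> (x+R)/\<delta>" using fl by simp
    have k2: "(x+R)/\<delta> < real k + 1" using fl by linarith
    have kd1: "real k * \<delta> \<le> x + R" using k1 dpos by (simp add: pos_le_divide_eq)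
    have kd2: "x + R < (real k + 1) * \<delta>" using k2 dpos by (simp add: pos_divide_less_eq)
    have "(x+R)/\<delta> < M" using True dpos Md by (simp add: pos_divide_less_eq)
    hence kM: "k < M" using k1 by linarith
    have xI: "x \<in> I k" unfolding I_def using kd1 kd2 by (simp add: algebra_simps)
    have gx: "g x = a k" unfolding g_def
    proof (subst sum.remove[of _ k])
      have "(\<Sum>j\<in>{..<M} - {k}. a j * indicat_real (I j) x) = 0"
        using disj xI by (intro sum.neutral) (auto simp: indicator_def)
      thus "a k * indicat_real (I k) x + (\<Sum>j\<in>{..<M} - {k}. a j * indicat_real (I j) x) = a k"
        using xI by simp
    qed (use kM in auto)
    have "\<bar>x - (-R + k*\<delta>)\<bar> \<le> \<delta>" using kd1 kd2 by (simp add: algebra_simps)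
    hence "\<bar>h x - a k\<bar> \<le> \<omega>" unfolding a_def using osc \<delta>_def by blast
    moreover have "indicat_real {-R..R} x = 1" using True by simp
    moreover have nn: "0 \<le> indicat_real {x. R \<le> \<bar>x\<bar>} x * \<bar>h x\<bar>" by simp
    ultimately have "\<omega> * indicat_real {-R..R} x = \<omega>" "\<bar>h x - g x\<bar> \<le> \<omega>" using gx by simp_all
    thus ?thesis using nn by linarith
  next
    case False
    have "x \<notin> I k" if "k < M" for k
    proof -
      have "real (Suc k) \<le> real M" using that by simp
      hence "(Suc k)*\<delta> \<le> M*\<delta>" using dpos by (intro mult_right_mono) auto
      moreover have "0 \<le> real k * \<delta>" using dpos by simp
      ultimately show ?thesis using False Md unfolding I_def by auto
    qed
    hence "g x = 0" unfolding g_def by (intro sum.neutral) auto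
    moreover have "indicat_real {x. R \<le> \<bar>x\<bar>} x = 1" using False by auto
    moreover have "0 \<le> \<omega> * indicat_real {-R..R} x" using om by simp
    ultimately show ?thesis by simp
  qed
  have "(LINT x|lborel. \<bar>h x - g x\<bar>) \<le>
      (LINT x|lborel. \<omega> * indicat_real {-R..R} x + indicat_real {x. R \<le> \<bar>x\<bar>} x * \<bar>h x\<bar>)"
    by (intro integral_mono intL pw Bochner_Integration.integrable_add integrable_mult_right intB intT)
  also have "\<dots> = \<omega> * (LINT x|lborel. indicat_real {-R..R} x) + (LINT x|lborel. indicat_real {x. R \<le> \<bar>x\<bar>} x * \<bar>h x\<bar>)"
    using intB intT by simp
  also have "(LINT x|lborel. indicat_real {-R..R} x) = 2*R"
    using R by (simp add: measure_def emeasure_lborel_Icc)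
  finally have "(LINT x|lborel. \<bar>h x - g x\<bar>) \<le> \<omega>*(2*R) + (LINT x:{x. R \<le> \<bar>x\<bar>}|lborel. \<bar>h x\<bar>)"
    by (simp add: set_lebesgue_integral_def)
  thus ?thesis using sf \<delta>_def by blast
qed


theorem lemmaA18:
  fixes f :: "nat \<Rightarrow> real \<Rightarrow> real" and \<alpha> :: real
  assumes "0 < \<alpha>" and "\<alpha> \<le> 1"
    and "\<And>n. integrable lborel (f n)"
    and "tight_seq f"
    and "approx_holder \<alpha> f"
  shows "\<forall>\<epsilon>>0. \<exists>n0 \<delta>. \<delta> > 0 \<and> (\<forall>n\<ge>n0. \<exists>g. step_fun_delta \<delta> g \<and>
           (LINT x|lborel. \<bar>f n x - g x\<bar>) \<le> \<epsilon>)"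
proof (intro allI impI)
  fix \<epsilon> :: real assume ep: "\<epsilon> > 0"
  obtain R where R: "R > 0" and tR: "\<And>n. (LINT x:{x. \<bar>x\<bar> \<ge> R}|lborel. \<bar>f n x\<bar>) \<le> \<epsilon>/2"
    using assms(4) ep unfolding tight_seq_def by (meson half_gt_zero)
  obtain C where C: "C > 0" and H: "\<And>\<eta>. \<eta> > 0 \<Longrightarrow> \<exists>N. \<forall>n\<ge>N. \<forall>x y. \<bar>x - y\<bar> \<ge> \<eta> \<longrightarrow>
        \<bar>f n x - f n y\<bar> \<le> C * \<bar>x - y\<bar> powr \<alpha>"
    using assms(5) unfolding approx_holder_def by blast
  define t where "t = (\<epsilon>/(8*R*C)) powr (1/\<alpha>)"
  have q: "\<epsilon>/(8*R*C) > 0" using ep R C by simp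
  have tpos: "t > 0" using q unfolding t_def by (simp only: powr_gt_zero)
  have tp: "t powr \<alpha> = \<epsilon>/(8*R*C)" unfolding t_def using q assms(1) ep R C
    by (simp add: powr_powr)
  define M where "M = nat \<lceil>6*R/t\<rceil> + 1"
  have M0: "M > 0" by (simp add: M_def)
  have "real M \<ge> 6*R/t" unfolding M_def by linarith
  hence "6*R \<le> t * real M" using tpos by (simp add: pos_divide_le_eq mult.commute)
  hence Mt: "6*R/real M \<le> t" using M0 by (simp add: pos_divide_le_eq mult.commute)
  define \<delta> where "\<delta> = 2*R/real M"
  have dpos: "\<delta> > 0" using R M0 by (simp add: \<delta>_def)
  obtain N where N: "\<And>n x y. n \<ge> N \<Longrightarrow> \<bar>x - y\<bar> \<ge> \<delta> \<Longrightarrow> \<bar>f n x - f n y\<bar> \<le> C * \<bar>x - y\<bar> powr \<alpha>"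
    using H[OF dpos] by blast
  define \<omega> where "\<omega> = 2*C*(3*\<delta>) powr \<alpha>"
  have om: "\<omega> \<ge> 0" using C by (simp add: \<omega>_def)
  have "\<omega>*(2*R) = 4*R*C*(6*R/real M) powr \<alpha>" unfolding \<omega>_def \<delta>_def by simp
  also have "\<dots> \<le> 4*R*C*t powr \<alpha>"
    using R C Mt assms(1) M0 by (intro mult_left_mono powr_mono2) auto
  also have "\<dots> = \<epsilon>/2" using tp R C by simp
  finally have omb: "\<omega>*(2*R) \<le> \<epsilon>/2" .
  show "\<exists>n0 \<delta>. \<delta> > 0 \<and> (\<forall>n\<ge>n0. \<exists>g. step_fun_delta \<delta> g \<and>
           (LINT x|lborel. \<bar>f n x - g x\<bar>) \<le> \<epsilon>)"
  proof (intro exI[of _ N] exI[of _ \<delta>] conjI allI impI)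
    show "\<delta> > 0" by (rule dpos)
    fix n assume n: "n \<ge> N"
    have osc: "\<bar>f n x - f n y\<bar> \<le> \<omega>" if xy: "\<bar>x - y\<bar> \<le> 2*R/real M" for x y
    proof -
      define z where "z = x + 2*\<delta>"
      have xy': "\<bar>x - y\<bar> \<le> \<delta>" using xy by (simp add: \<delta>_def)
      have "\<bar>f n x - f n z\<bar> \<le> C * \<bar>x - z\<bar> powr \<alpha>" using N[OF n, of x z] dpos by (simp add: z_def)
      also have "\<dots> \<le> C * (3*\<delta>) powr \<alpha>"
        using C dpos assms(1) by (intro mult_left_mono powr_mono2) (auto simp: z_def)
      finally have 1: "\<bar>f n x - f n z\<bar> \<le> C * (3*\<delta>) powr \<alpha>" .
      have yz1: "\<bar>y - z\<bar> \<ge> \<delta>" and yz2: "\<bar>y - z\<bar> \<le> 3*\<delta>" using xy' dpos by (auto simp: z_def)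
      have "\<bar>f n y - f n z\<bar> \<le> C * \<bar>y - z\<bar> powr \<alpha>" using N[OF n yz1] .
      also have "\<dots> \<le> C * (3*\<delta>) powr \<alpha>"
        using C yz2 assms(1) by (intro mult_left_mono powr_mono2) auto
      finally have 2: "\<bar>f n y - f n z\<bar> \<le> C * (3*\<delta>) powr \<alpha>" .
      show ?thesis using 1 2 unfolding \<omega>_def by linarith
    qed
    obtain g where g: "step_fun_delta (2*R/real M) g"
      and gi: "(LINT x|lborel. \<bar>f n x - g x\<bar>) \<le> \<omega>*(2*R) + (LINT x:{x. R \<le> \<bar>x\<bar>}|lborel. \<bar>f n x\<bar>)"
      using step_approx[OF assms(3) R M0 osc om] by blast
    show "\<exists>g. step_fun_delta \<delta> g \<and> (LINT x|lborel. \<bar>f n x - g x\<bar>) \<le> \<epsilon>"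
      using g gi omb tR[of n] unfolding \<delta>_def by (intro exI[of _ g]) auto
  qed
qed

end
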